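(* Let $r$ be a positive integer and $(S,\mathcal T)$ a feasible instance of test set with redundancy $r$, with $|S|=n$. Let $\mathcal T^*$ be an optimal (minimum-cardinality) $r$-test set, $m^*=|\mathcal T^*|$, let $\#_0=rn(n-1)/2$, and let $\#_B$ be the number of item pairs differentiated by exactly $r$ tests in $\mathcal T^*$; assume $\#_B>0$. Then the size of every solution returned by the set cover greedy algorithm SGA (with any tie-breaking) is at most $$\Big(\ln\#_0-\frac{1}{r+1}\ln\frac{\#_0}{\#_B}+\frac{r}{r+1}\ln(r+1)+1\Big)m^*+1.$$
   Context: Test set with redundancy $r\in\mathbb Z^+$: the input is a finite set of items $S$ with $|S|=n$ and a collection $\mathcal T$ of subsets of $S$ (called tests); it is assumed that there are no two tests $T_1,T_2\in\mathcal T$ with $T_1=S-T_2$. An item pair is a set $\{i,j\}$ of two different items of $S$. A test $T$ differentiates an item pair $a$ if $|T\cap a|=1$; for a family $\mathcal F$ of tests, $\perp(a,\mathcal F)$ denotes the number of tests in $\mathcal F$ that differentiate $a$. A family $\mathcal T'\subseteq\mathcal T$ is an $r$-test set of $S$ if every item pair is differentiated by at least $r$ different tests of $\mathcal T'$; the goal is to find an $r$-test set of minimum cardinality (the instance is feasible if some $r$-test set exists). For a family $\bar{\mathcal T}\subseteq\mathcal T$ define the differentiation measure $\#(\bar{\mathcal T})=\sum_a\max(r-\perp(a,\bar{\mathcal T}),0)$, the sum over all item pairs $a$; note $\#(\varnothing)=rn(n-1)/2$. The set cover greedy algorithm SGA: start with $\bar{\mathcal T}=\varnothing$; while $\#(\bar{\mathcal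 T})>0$, select a test $T\in\mathcal T-\bar{\mathcal T}$ minimizing $\#(\bar{\mathcal T}\cup\{T\})$ and set $\bar{\mathcal T}\leftarrow\bar{\mathcal T}\cup\{T\}$; return $\bar{\mathcal T}$. *)

theory Defs
  imports Complex_Main
begin

definition item_pairs :: "'a set \<Rightarrow> 'a set set" where
  "item_pairs S = {a. \<exists>i j. i \<in> S \<and> j \<in> S \<and> i \<noteq> j \<and> a = {i, j}}"

definition differentiates :: "'a set \<Rightarrow> 'a set \<Rightarrow> bool" where
  "differentiates T a \<longleftrightarrow> card (T \<inter> a) = 1"

definition perp :: "'a set \<Rightarrow> 'a set set \<Rightarrow> nat" where
  "perp a F = card {T \<in> F. differentiates T a}"

definition is_r_test_set :: "nat \<Rightarrow> 'a set \<Rightarrow> 'a set set \<Rightarrow> 'a set set \<Rightarrow> bool" where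
  "is_r_test_set r S Tests F \<longleftrightarrow> F \<subseteq> Tests \<and> (\<forall>a \<in> item_pairs S. perp a F \<ge> r)"

(* differentiation measure #(F) = sum over pairs of max(r - perp, 0) (nat subtraction truncates) *)
definition diff_measure :: "nat \<Rightarrow> 'a set \<Rightarrow> 'a set set \<Rightarrow> nat" where
  "diff_measure r S F = (\<Sum>a \<in> item_pairs S. r - perp a F)"

inductive sga_reach :: "nat \<Rightarrow> 'a set \<Rightarrow> 'a set set \<Rightarrow> 'a set set \<Rightarrow> bool"
  for r S Tests where
  start: "sga_reach r S Tests {}"
| step: "\<lbrakk> sga_reach r S Tests F; diff_measure r S F > 0; T \<in> Tests - F;
           \<forall>T' \<in> Tests - F. diff_measure r S (F \<union> {T}) \<le> diff_measure r S (F \<union> {T'}) \<rbrakk>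
         \<Longrightarrow> sga_reach r S Tests (F \<union> {T})"

definition sga_output :: "nat \<Rightarrow> 'a set \<Rightarrow> 'a set set \<Rightarrow> 'a set set \<Rightarrow> bool" where
  "sga_output r S Tests F \<longleftrightarrow> sga_reach r S Tests F \<and> diff_measure r S F = 0"

end

theory Submission
  imports Defs
begin


lemma card_filter_sum: "finite A \<Longrightarrow> card {x\<in>A. Q x} = (\<Sum>x\<in>A. if Q x then 1 else 0)"
  by (simp add: sum.If_cases Int_def)

lemma perp_insert:
  assumes "finite F" "T \<notin> F"
  shows "perp a (insert T F) = perp a F + (if differentiates T a then 1 else 0)"
proof -
  have "{T' \<in> insert T F. differentiates T' a} =
        (if differentiates T a then insert T {T'\<in>F. differentiates T' a} else {T'\<in>F. differentiates T' a})"
    by auto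
  then show ?thesis using assms by (simp add: perp_def card_insert_disjoint)
qed

definition G :: "nat \<Rightarrow> 'a set \<Rightarrow> 'a set set \<Rightarrow> 'a set \<Rightarrow> nat" where
  "G r S F T = card {a\<in>item_pairs S. perp a F < r \<and> differentiates T a}"

lemma finite_pairs: "finite S \<Longrightarrow> finite (item_pairs S)"
  by (rule finite_subset[of _ "Pow S"]) (auto simp: item_pairs_def)

lemma gain_eq:
  assumes "finite S" "finite F" "T \<notin> F"
  shows "diff_measure r S F = diff_measure r S (insert T F) + G r S F T"
proof -
  have "diff_measure r S F = (\<Sum>a\<in>item_pairs S. (r - perp a (insert T F)) + (if perp a F < r \<and> differentiates T a then 1 else 0))"
    unfolding diff_measure_def by (rule sum.cong) (auto simp: perp_insert[OF assms(2,3)])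
  also have "\<dots> = diff_measure r S (insert T F) + G r S F T"
    unfolding diff_measure_def G_def sum.distrib card_filter_sum[OF finite_pairs[OF assms(1)]] ..
  finally show ?thesis .
qed

lemma swap_count:
  assumes "finite X" "finite P"
  shows "(\<Sum>T\<in>X. card {a\<in>P. Q a T}) = (\<Sum>a\<in>P. card {T\<in>X. Q a T})"
  using assms by (simp add: card_filter_sum sum.swap[of _ X P])

lemma sum_G_bounds:
  assumes fS: "finite S" and fF: "finite F" and fO: "finite Topt"
    and cov: "\<forall>a\<in>item_pairs S. perp a Topt \<ge> r"
  shows "diff_measure r S F \<le> (\<Sum>T\<in>Topt - F. G r S F T)"
    and "(r+1) * diff_measure r S F \<le> r * (\<Sum>T\<in>Topt - F. G r S F T) + r * card {a\<in>item_pairs S. perp a Topt = r}"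
proof -
  define P where "P = item_pairs S"
  have fP: "finite P" using finite_pairs[OF fS] P_def by simp
  define h where "h a = card {T\<in>Topt - F. perp a F < r \<and> differentiates T a}" for a
  have sw: "(\<Sum>T\<in>Topt - F. G r S F T) = (\<Sum>a\<in>P. h a)"
    unfolding G_def h_def P_def[symmetric]
    using swap_count[of "Topt - F" P "\<lambda>a T. perp a F < r \<and> differentiates T a"] fO fP by simp
  have key: "perp a Topt \<le> h a + perp a F" if "perp a F < r" for a
  proof -
    have "{T\<in>Topt. differentiates T a} \<subseteq> {T\<in>Topt - F. perp a F < r \<and> differentiates T a} \<union> {T\<in>F. differentiates T a}"
      using that by auto
    then have "perp a Topt \<le> card ({T\<in>Topt - F. perp a F < r \<and> differentiates T a} \<union> {T\<in>F. differentiates T a})"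
      unfolding perp_def by (rule card_mono[rotated]) (use fO fF in auto)
    also have "\<dots> \<le> h a + perp a F" unfolding h_def perp_def by (rule card_Un_le)
    finally show ?thesis .
  qed
  have a1: "r - perp a F \<le> h a" if "a \<in> P" for a
  proof (cases "perp a F < r")
    case True
    then show ?thesis using key[OF True] cov that P_def by force
  qed simp
  have a2: "(r+1) * (r - perp a F) \<le> r * h a + r * (if perp a Topt = r then 1 else 0)" if "a \<in> P" for a
  proof (cases "perp a F < r")
    case True
    have k: "perp a Topt \<le> h a + perp a F" using key[OF True] .
    have c: "perp a Topt \<ge> r" using cov that P_def by force
    show ?thesis
    proof (cases "perp a Topt = r")
      case True
      define \<delta> where "\<delta> = r - perp a F"
      have h1: "\<delta> \<le> h a" using k True \<delta>_def by linarith
      have h2: "\<delta> \<le> r" using \<delta>_def by simp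
      have "(r+1) * \<delta> = r * \<delta> + \<delta>" by simp
      also have "\<dots> \<le> r * h a + r" using h1 h2 by (simp add: add_mono)
      finally show ?thesis using True \<delta>_def by simp
    next
      case False
      then have "r - perp a F + 1 \<le> h a" using k c \<open>perp a F < r\<close> by linarith
      then have "r * (r - perp a F + 1) \<le> r * h a" by (rule mult_le_mono2)
      moreover have "r - perp a F \<le> r" by simp
      moreover have "(r+1) * (r - perp a F) \<le> r * (r - perp a F + 1)"
        using \<open>r - perp a F \<le> r\<close> by (simp add: algebra_simps)
      ultimately show ?thesis using False by simp
    qed
  qed simp
  show "diff_measure r S F \<le> (\<Sum>T\<in>Topt - F. G r S F T)"
    unfolding sw diff_measure_def P_def[symmetric] by (rule sum_mono) (rule a1)
  have "(r+1) * diff_measure r S F = (\<Sum>a\<in>P. (r+1) * (r - perp a F))"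
    unfolding diff_measure_def P_def[symmetric] by (simp add: sum_distrib_left)
  also have "\<dots> \<le> (\<Sum>a\<in>P. r * h a + r * (if perp a Topt = r then 1 else 0))"
    by (rule sum_mono) (rule a2)
  also have "\<dots> = r * (\<Sum>a\<in>P. h a) + r * card {a\<in>P. perp a Topt = r}"
    by (simp add: sum.distrib sum_distrib_left card_filter_sum[OF fP])
  finally show "(r+1) * diff_measure r S F \<le> r * (\<Sum>T\<in>Topt - F. G r S F T) + r * card {a\<in>item_pairs S. perp a Topt = r}"
    using sw P_def by simp
qed



lemma ln_diff_ge: fixes x y :: real assumes "0 < x" "0 < y" shows "(x - y) / x \<le> ln x - ln y"
proof -
  have "ln (y/x) \<le> y/x - 1" using assms by (intro ln_le_minus_one) simp
  moreover have "ln (y/x) = ln y - ln x" using assms by (simp add: ln_div)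
  moreover have "y/x - 1 = - ((x - y)/x)" using assms by (simp add: field_simps)
  ultimately show ?thesis by linarith
qed

lemma lnX_aux: fixes r B x :: real assumes r1: "r \<ge> 1" and B: "B > 0" and that: "\<not> x \<le> r*B"
  shows "(r+1)*x - r*B > 0"
proof -
    have "x > 0" using that r1 B by (smt (verit) mult_pos_pos)
    then have "r*x \<ge> x" using r1 by simp
    moreover have "(r+1)*x - r*B = r*x + x - r*B" by (simp add: algebra_simps)
    ultimately show "(r+1)*x - r*B > 0" using that \<open>x>0\<close> by linarith
qed

definition Pot :: "real \<Rightarrow> real \<Rightarrow> real \<Rightarrow> real" where
  "Pot r B x = (if x \<le> r*B then ln x else ln (r*B) + r/(r+1) * ln (((r+1)*x - r*B)/(r*r*B)))"

lemma Pot_step: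
  fixes r B m d d' :: real
  assumes r1: "r \<ge> 1" and B: "B > 0" and m: "m > 0" and d1: "d' \<ge> 1" and dd: "d' \<le> d"
    and g1: "m*(d-d') \<ge> d" and g2: "r*m*(d-d') + r*B \<ge> (r+1)*d"
  shows "m * (Pot r B d - Pot r B d') \<ge> 1"
proof -
  have rB: "r*B > 0" using r1 B by simp
  have dpos: "d > 0" using d1 dd by simp
  have lnX: "ln (((r+1)*x - r*B)/(r*r*B)) = ln ((r+1)*x - r*B) - ln (r*B) - ln r" if "x > r*B" for x
  proof -
    have "(r+1)*x - r*B > 0" using lnX_aux[OF r1 B, of x] that by simp
    then show ?thesis using r1 B by (simp add: ln_div ln_mult mult.assoc)
  qed
  show ?thesis
  proof (cases "d \<le> r*B")
    case True
    then have "Pot r B d - Pot r B d' = ln d - ln d'" using dd by (simp add: Pot_def)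
    also have "\<dots> \<ge> (d - d')/d" using ln_diff_ge[of d d'] dpos d1 by simp
    finally have "m*(Pot r B d - Pot r B d') \<ge> m*((d-d')/d)" using m by (intro mult_left_mono) auto
    moreover have "m*((d-d')/d) \<ge> 1" using g1 dpos by (simp add: field_simps)
    ultimately show ?thesis by linarith
  next
    case False
    define X where "X = (r+1)*d - r*B"
    have Xpos: "X > 0" using lnX_aux[OF r1 B, of d] False unfolding X_def by simp
    have mX: "r*m*(d-d') \<ge> X" using g2 unfolding X_def by simp
    have Pd: "Pot r B d = ln (r*B) + r/(r+1) * (ln X - ln (r*B) - ln r)"
      using False lnX[of d] by (simp add: Pot_def X_def)
    show ?thesis
    proof (cases "d' \<le> r*B")
      case False': False
      define X' where "X' = (r+1)*d' - r*B"
      have X'pos: "X' > 0" using lnX_aux[OF r1 B, of d'] False' unfolding X'_def by simp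
      have Pd': "Pot r B d' = ln (r*B) + r/(r+1) * (ln X' - ln (r*B) - ln r)"
        using False' lnX[of d'] by (simp add: Pot_def X'_def)
      have "Pot r B d - Pot r B d' = r/(r+1) * (ln X - ln X')"
        unfolding Pd Pd' by (simp add: algebra_simps add_divide_distrib[symmetric] diff_divide_distrib)
      also have "ln X - ln X' \<ge> (X - X')/X" using ln_diff_ge Xpos X'pos by simp
      then have "r/(r+1) * (ln X - ln X') \<ge> r/(r+1) * ((X - X')/X)"
        using r1 by (intro mult_left_mono) auto
      also have "r/(r+1) * ((X - X')/X) = r*(d-d')/X"
      proof -
        have "X - X' = (r+1)*(d-d')" by (simp add: X_def X'_def algebra_simps)
        then show ?thesis using r1 by simp
      qed
      finally have "m * (Pot r B d - Pot r B d') \<ge> m * (r*(d-d')/X)" using m by (intro mult_left_mono) auto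
      moreover have "m * (r*(d-d')/X) \<ge> 1" using mX Xpos by (simp add: field_simps)
      ultimately show ?thesis by linarith
    next
      case True': True
      have "Pot r B d' = ln d'" using True' by (simp add: Pot_def)
      have e1: "ln X - ln (r*B) - ln r \<ge> (X - r*r*B)/X"
      proof -
        have "ln X - ln (r*r*B) \<ge> (X - r*r*B)/X" using ln_diff_ge[of X "r*r*B"] Xpos rB r1 mult_pos_pos[of r "r*B"] by (simp add: mult.assoc)
        moreover have "ln (r*r*B) = ln (r*B) + ln r" using rB r1 B ln_mult[of r "r*B"] ln_mult[of r B] by (simp add: mult.assoc)
        ultimately show ?thesis by linarith
      qed
      have "r/(r+1) * ((X - r*r*B)/X) = r*(d - r*B)/X"
      proof -
        have "X - r*r*B = (r+1)*(d - r*B)" by (simp add: X_def algebra_simps)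
        then show ?thesis using r1 by simp
      qed
      have e2: "ln (r*B) - ln d' \<ge> (r*B - d')/(r*B)" using ln_diff_ge rB d1 by simp
      have "Pot r B d - Pot r B d' = r/(r+1) * (ln X - ln (r*B) - ln r) + (ln (r*B) - ln d')"
        using Pd \<open>Pot r B d' = ln d'\<close> by simp
      also have "\<dots> \<ge> r/(r+1) * ((X - r*r*B)/X) + (r*B - d')/(r*B)"
      proof -
        have "r/(r+1) \<ge> 0" using r1 by simp
        then have "r/(r+1) * (ln X - ln (r*B) - ln r) \<ge> r/(r+1) * ((X - r*r*B)/X)"
          using e1 by (intro mult_left_mono) auto
        then show ?thesis using e2 by linarith
      qed
      finally have A: "Pot r B d - Pot r B d' \<ge> r*(d - r*B)/X + (r*B - d')/(r*B)"
        using \<open>r/(r+1) * ((X - r*r*B)/X) = r*(d - r*B)/X\<close> by simp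
      have md: "m*(d-d') > 0" using g1 dpos by linarith
      have b1: "r*(d - r*B)/X \<ge> (d - r*B)/(m*(d-d'))"
      proof -
        have "r*(d - r*B)/X = (d - r*B) * (r/X)" by simp
        moreover have "(d - r*B)/(m*(d-d')) = (d - r*B) * (1/(m*(d-d')))" by simp
        moreover have "r/X \<ge> 1/(m*(d-d'))" using mX Xpos md by (simp add: field_simps)
        moreover have "d - r*B \<ge> 0" using False by simp
        ultimately show ?thesis by (metis mult_left_mono)
      qed
      have b2: "(r*B - d')/(r*B) \<ge> (r*B - d')/(m*(d-d'))"
        using True' rB md g1 False by (intro divide_left_mono) (auto simp: mult_pos_pos)
      have "(d - r*B)/(m*(d-d')) + (r*B - d')/(m*(d-d')) = 1/m"
      proof -
        have "(d - r*B)/(m*(d-d')) + (r*B - d')/(m*(d-d')) = (d-d')/(m*(d-d'))"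
          by (simp add: add_divide_distrib[symmetric])
        also have "\<dots> = 1/m" using md m by (cases "d = d'") auto
        finally show ?thesis .
      qed
      then have "Pot r B d - Pot r B d' \<ge> 1/m" using A b1 b2 by linarith
      then show ?thesis using m by (simp add: field_simps)
    qed
  qed
qed

lemma Pot_nonneg:
  fixes r B x :: real
  assumes "r \<ge> 1" "B \<ge> 1" "x \<ge> 1"
  shows "Pot r B x \<ge> 0"
proof (cases "x \<le> r*B")
  case True then show ?thesis using assms by (simp add: Pot_def)
next
  case False
  have "1*1 \<le> r*B" using assms by (intro mult_mono) auto
  then have rB: "r*B \<ge> 1" by simp
  have "(r+1)*x - r*B > r*r*B"
  proof -
    have "(r+1)*x > (r+1)*(r*B)" using False assms by (intro mult_strict_left_mono) auto
    then show ?thesis by (simp add: algebra_simps)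
  qed
  moreover have "r*r*B > 0" using assms by simp
  ultimately have "((r+1)*x - r*B)/(r*r*B) \<ge> 1" by simp
  then have "ln (((r+1)*x - r*B)/(r*r*B)) \<ge> 0" by simp
  moreover have "ln (r*B) \<ge> 0" using rB by simp
  ultimately show ?thesis using False assms by (simp add: Pot_def)
qed



lemma reach_subset: "sga_reach r S Tests F \<Longrightarrow> F \<subseteq> Tests"
  by (induction rule: sga_reach.induct) auto

lemma greedy_G:
  assumes fS: "finite S" and fF: "finite F" and T: "T \<in> Tests - F"
    and minT: "\<forall>T' \<in> Tests - F. diff_measure r S (F \<union> {T}) \<le> diff_measure r S (F \<union> {T'})"
    and sub: "Topt \<subseteq> Tests" and fO: "finite Topt"
  shows "(\<Sum>T'\<in>Topt - F. G r S F T') \<le> card Topt * G r S F T"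
proof -
  have le: "G r S F T' \<le> G r S F T" if "T' \<in> Topt - F" for T'
  proof -
    have "T' \<in> Tests - F" using that sub by auto
    then have "diff_measure r S (insert T F) \<le> diff_measure r S (insert T' F)" using minT by simp
    moreover have "diff_measure r S F = diff_measure r S (insert T F) + G r S F T"
      using gain_eq[OF fS fF] T by simp
    moreover have "diff_measure r S F = diff_measure r S (insert T' F) + G r S F T'"
      using gain_eq[OF fS fF] that by simp
    ultimately show ?thesis by linarith
  qed
  have "(\<Sum>T'\<in>Topt - F. G r S F T') \<le> card (Topt - F) * G r S F T"
    using sum_bounded_above[of "Topt - F" "G r S F" "G r S F T"] le by simp
  also have "\<dots> \<le> card Topt * G r S F T"
    using fO by (intro mult_right_mono card_mono) auto
  finally show ?thesis .
qed

lemma main_induct: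
  assumes reach: "sga_reach r S Tests F"
    and r0: "r > 0" and fS: "finite S" and TS: "\<forall>T \<in> Tests. T \<subseteq> S"
    and opt: "is_r_test_set r S Tests Topt"
    and Bpos: "card {a \<in> item_pairs S. perp a Topt = r} > 0"
  shows "diff_measure r S F > 0 \<Longrightarrow>
     real (card F) \<le> real (card Topt) * (Pot (real r) (real (card {a \<in> item_pairs S. perp a Topt = r})) (real (diff_measure r S {}))
        - Pot (real r) (real (card {a \<in> item_pairs S. perp a Topt = r})) (real (diff_measure r S F)))"
  using reach
proof (induction rule: sga_reach.induct)
  case start
  then show ?case by simp
next
  case (step F T)
  define B where "B = card {a \<in> item_pairs S. perp a Topt = r}"
  define m where "m = card Topt"
  have "Tests \<subseteq> Pow S" using TS by auto
  then have fT: "finite Tests" using fS finite_subset by blast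
  have sub: "Topt \<subseteq> Tests" and cov: "\<forall>a\<in>item_pairs S. perp a Topt \<ge> r"
    using opt unfolding is_r_test_set_def by auto
  have fO: "finite Topt" using sub fT finite_subset by blast
  have fF: "finite F" using reach_subset[OF step.hyps(1)] fT finite_subset by blast
  have TF: "T \<notin> F" using step.hyps by auto
  have eq: "diff_measure r S F = diff_measure r S (insert T F) + G r S F T"
    using gain_eq[OF fS fF TF] .
  have gs: "(\<Sum>T'\<in>Topt - F. G r S F T') \<le> m * G r S F T"
    using greedy_G[OF fS fF step.hyps(3) step.hyps(4) sub fO] m_def by simp
  have b1: "diff_measure r S F \<le> m * G r S F T"
    using sum_G_bounds(1)[OF fS fF fO cov] gs by linarith
  have b2: "(r+1) * diff_measure r S F \<le> r * (m * G r S F T) + r * B"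
  proof -
    have "r * (\<Sum>T'\<in>Topt - F. G r S F T') \<le> r * (m * G r S F T)" using gs by (rule mult_le_mono2)
    then show ?thesis using sum_G_bounds(2)[OF fS fF fO cov] unfolding B_def by linarith
  qed
  have posF': "diff_measure r S (insert T F) > 0" using step.prems by simp
  have IH: "real (card F) \<le> real m * (Pot (real r) (real B) (real (diff_measure r S {})) - Pot (real r) (real B) (real (diff_measure r S F)))"
    using step.IH step.hyps(2) B_def m_def by simp
  define d where "d = real (diff_measure r S F)"
  define d' where "d' = real (diff_measure r S (insert T F))"
  have dd: "d - d' = real (G r S F T)" using eq d_def d'_def by simp
  have mpos: "real m > 0"
  proof -
    have "m * G r S F T > 0" using b1 step.hyps(2) by linarith
    then show ?thesis by simp
  qed
  have stepP: "real m * (Pot (real r) (real B) d - Pot (real r) (real B) d') \<ge> 1"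
  proof (rule Pot_step)
    show "real r \<ge> 1" using r0 by simp
    show "real B > 0" using Bpos B_def by simp
    show "real m > 0" by (rule mpos)
    show "d' \<ge> 1" using posF' d'_def by simp
    show "d' \<le> d" using dd by simp
    have "real (diff_measure r S F) \<le> real (m * G r S F T)" using b1 by (simp only: of_nat_le_iff)
    then show "real m * (d - d') \<ge> d" unfolding dd by (simp add: d_def)
    have "real ((r+1) * diff_measure r S F) \<le> real (r * (m * G r S F T) + r * B)"
      using b2 by (simp only: of_nat_le_iff)
    then show "real r * real m * (d - d') + real r * real B \<ge> (real r + 1) * d"
      unfolding dd by (simp add: d_def algebra_simps)
  qed
  have "card (F \<union> {T}) = card F + 1" using fF TF by simp
  then show ?case using IH stepP unfolding d_def d'_def B_def[symmetric] m_def[symmetric]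
    by (simp add: algebra_simps)
qed



lemma card_pairs:
  assumes "finite S"
  shows "real (card (item_pairs S)) = real (card S) * (real (card S) - 1) / 2"
proof -
  have "item_pairs S = {A. A \<subseteq> S \<and> card A = 2}"
    unfolding item_pairs_def card_2_iff by auto
  then have c: "card (item_pairs S) = card S choose 2" using n_subsets[OF assms] by simp
  define n where "n = card S"
  have "2 * (n choose 2) = n * (n - 1)"
  proof -
    have "even (n * (n - 1))" by (cases n) auto
    then show ?thesis unfolding choose_two by (rule even_two_times_div_two)
  qed
  then have "real (2 * (n choose 2)) = real (n * (n - 1))" by (simp only:)
  then have "2 * real (n choose 2) = real n * real (n - 1)" by simp
  moreover have "real n * real (n - 1) = real n * (real n - 1)"
    by (cases n) auto
  ultimately have "2 * real (n choose 2) = real n * (real n - 1)" by simp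
  then show ?thesis using c n_def by simp
qed

lemma final_ineq:
  fixes r B d0 :: real
  assumes r1: "r \<ge> 1" and B1: "B \<ge> 1" and dB: "d0 \<ge> r*B"
  shows "Pot r B d0 \<le> ln d0 - 1 / (r + 1) * ln (d0 / B) + r / (r + 1) * ln (r + 1) + 1"
proof -
  have Bp: "B > 0" using B1 by simp
  have rB: "r*B > 0" using r1 Bp by simp
  have d0p: "d0 > 0" using dB rB by linarith
  define U where "U = ln (r+1) + ln d0 - ln (r*B) - ln r"
  have U_eq: "ln ((r+1)*d0/(r*r*B)) = U"
    using r1 Bp d0p unfolding U_def by (simp add: ln_div ln_mult mult.assoc)
  have P1: "Pot r B d0 \<le> ln (r*B) + r/(r+1) * U"
  proof (cases "d0 \<le> r*B")
    case True
    then have "d0 = r*B" using dB by simp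
    have "(r+1)*d0/(r*r*B) = (r+1)/r" using \<open>d0 = r*B\<close> Bp r1 by simp
    then have "(r+1)*d0/(r*r*B) \<ge> 1" using r1 by simp
    then have "U \<ge> 0" using U_eq ln_ge_zero[of "(r+1)*d0/(r*r*B)"] by simp
    then show ?thesis using True \<open>d0 = r*B\<close> r1 by (simp add: Pot_def)
  next
    case False
    have X: "(r+1)*d0 - r*B > 0" using lnX_aux[OF r1 Bp False] .
    have "ln (((r+1)*d0 - r*B)/(r*r*B)) \<le> ln ((r+1)*d0/(r*r*B))"
    proof -
      have rrB: "r*r*B > 0" using r1 Bp by simp
      show ?thesis using X rrB rB by (intro ln_mono divide_right_mono) auto
    qed
    then have "r/(r+1) * ln (((r+1)*d0 - r*B)/(r*r*B)) \<le> r/(r+1) * U"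
      using U_eq r1 by (intro mult_left_mono) auto
    then show ?thesis using False by (simp add: Pot_def)
  qed
  have lrB: "ln (r*B) = ln r + ln B" using r1 Bp by (simp add: ln_mult)
  have ld: "ln (d0/B) = ln d0 - ln B" using d0p Bp by (simp add: ln_div)
  define E where "E = ln d0 - 1 / (r + 1) * ln (d0 / B) + r / (r + 1) * ln (r + 1) + 1"
  define Q where "Q = ln (r*B) + r/(r+1) * U"
  define a where "a = 1/(r+1)"
  have ra: "r/(r+1) = 1 - a" unfolding a_def using r1 by (simp add: field_simps)
  have "E - Q = 1 + (1 - 2*a)*ln r"
    unfolding E_def Q_def U_def lrB ld ra a_def[symmetric] by (simp add: algebra_simps)
  moreover have "a \<le> 1/2" unfolding a_def using r1 by (simp add: field_simps)
  moreover have "ln r \<ge> 0" using r1 by simp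
  ultimately have "E - Q \<ge> 0" by (simp add: mult_nonneg_nonneg)
  then show ?thesis using P1 unfolding E_def Q_def by linarith
qed

theorem lemma2:
  fixes r :: nat and S :: "'a set" and Tests :: "'a set set" and Topt :: "'a set set"
  assumes "r > 0"
    and "finite S"
    and "\<forall>T \<in> Tests. T \<subseteq> S"
    and "\<forall>T1 \<in> Tests. \<forall>T2 \<in> Tests. T1 \<noteq> S - T2"
    and "is_r_test_set r S Tests Topt"
    and "\<forall>F. is_r_test_set r S Tests F \<longrightarrow> card Topt \<le> card F"
    and "card {a \<in> item_pairs S. perp a Topt = r} > 0"
    and "sga_output r S Tests F"
  shows "let n = card S; m = real (card Topt);
             h0 = real r * real n * (real n - 1) / 2;
             hB = real (card {a \<in> item_pairs S. perp a Topt = r})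
         in real (card F) \<le>
            (ln h0 - 1 / (real r + 1) * ln (h0 / hB) + real r / (real r + 1) * ln (real r + 1) + 1) * m + 1"
proof -
  note r0 = assms(1) and fS = assms(2) and TS = assms(3) and opt = assms(5) and Bpos = assms(7)
  define B where "B = card {a \<in> item_pairs S. perp a Topt = r}"
  define m where "m = real (card Topt)"
  define d0 where "d0 = diff_measure r S {}"
  have d0_eq: "d0 = r * card (item_pairs S)" unfolding d0_def diff_measure_def perp_def by simp
  have h0: "real r * real (card S) * (real (card S) - 1) / 2 = real d0"
    using card_pairs[OF fS] d0_eq by simp
  have BP: "B \<le> card (item_pairs S)"
    unfolding B_def by (rule card_mono[OF finite_pairs[OF fS]]) auto
  have reach: "sga_reach r S Tests F" and F0: "diff_measure r S F = 0"
    using assms(8) unfolding sga_output_def by auto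
  have bound: "real (card F) \<le> m * Pot (real r) (real B) (real d0) + 1"
    using reach
  proof (cases rule: sga_reach.cases)
    case start
    then have "d0 = 0" using F0 d0_def by simp
    then have "card (item_pairs S) = 0" using d0_eq r0 by simp
    then show ?thesis using BP Bpos B_def by simp
  next
    case (step F' T)
    have "Tests \<subseteq> Pow S" using TS by auto
    then have fT: "finite Tests" using fS finite_subset by blast
    have fF': "finite F'" using reach_subset[OF step(2)] fT finite_subset by blast
    have "card F = card F' + 1" using step(1,4) fF' by simp
    have IH: "real (card F') \<le> m * (Pot (real r) (real B) (real d0) - Pot (real r) (real B) (real (diff_measure r S F')))"
      using main_induct[OF step(2) r0 fS TS opt Bpos] step(3) unfolding m_def B_def d0_def by simp
    have "Pot (real r) (real B) (real (diff_measure r S F')) \<ge> 0"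
      using Pot_nonneg[of "real r" "real B" "real (diff_measure r S F')"] r0 Bpos B_def step(3) by simp
    moreover have "m \<ge> 0" unfolding m_def by simp
    ultimately have "m * Pot (real r) (real B) (real (diff_measure r S F')) \<ge> 0" by simp
    then have "real (card F') \<le> m * Pot (real r) (real B) (real d0)"
      using IH by (simp add: right_diff_distrib)
    then show ?thesis using \<open>card F = card F' + 1\<close> by simp
  qed
  have fin: "Pot (real r) (real B) (real d0) \<le> ln (real d0) - 1 / (real r + 1) * ln (real d0 / real B) + real r / (real r + 1) * ln (real r + 1) + 1"
  proof (rule final_ineq)
    show "real r \<ge> 1" using r0 by simp
    show "real B \<ge> 1" using Bpos B_def by simp
    have "r * B \<le> d0" using BP d0_eq by simp
    then have "real (r * B) \<le> real d0" by (simp only: of_nat_le_iff)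
    then show "real d0 \<ge> real r * real B" by simp
  qed
  have "m * Pot (real r) (real B) (real d0) \<le> m * (ln (real d0) - 1 / (real r + 1) * ln (real d0 / real B) + real r / (real r + 1) * ln (real r + 1) + 1)"
    using fin unfolding m_def by (intro mult_left_mono) auto
  then show ?thesis unfolding Let_def h0 B_def[symmetric] m_def[symmetric]
    using bound by (simp only: mult.commute)
qed

end
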